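(* Let $\Gamma$ be a $g\mathbf{PAI}_0$-theory. For all formulas $\varphi,\psi$: $[N(\varphi)]_{\sim_\Gamma}\le_\oplus[N(\psi)]_{\sim_\Gamma}$ in the quotient algebra $\langle N[Fm]/{\sim_\Gamma},\oplus,\rhd\rangle$ if and only if $N(\varphi)\le_\Gamma N(\psi)$ (equivalently, iff $\varphi\prec\psi\in\Gamma$).
   Context: Language: fix a countable set $Var$ of variables; $Fm$ is the set of formulas built from $Var$ with unary $\neg,\Box$ and binary $\vee,\to$. Abbreviations: $\varphi\wedge\psi:=\neg(\neg\varphi\vee\neg\psi)$, $\varphi\supset\psi:=\neg\varphi\vee\psi$, $\varphi\equiv\psi:=(\varphi\supset\psi)\wedge(\psi\supset\varphi)$, $\varphi\prec\psi:=\psi\to(\varphi\vee\neg\varphi)$. $g\mathbf{PAI}_0$ is the Hilbert calculus with axiom schemes (A1) $\varphi\supset(\psi\supset\varphi)$; (A2) $(\varphi\supset(\psi\supset\chi))\supset((\varphi\supset\psi)\supset(\varphi\supset\chi))$; (A3) $(\neg\varphi\supset\neg\psi)\supset(\psi\supset\varphi)$; (A4) $(\varphi\to\psi)\equiv(\Box(\varphi\supset\psi)\wedge(\psi\prec\varphi))$; (K) $\Box(\varphi\supset\psi)\supset(\Box\varphi\supset\Box\psi)$; (T) $\Box\varphi\supset\varphi$; (4) $\Box\varphi\supset\Box\Box\varphi$; (O1) $\varphi\prec\varphi$; (O2) $((\varphi\prec\psi)\wedge(\psi\prec\chi))\supset(\varphi\prec\chi)$; (O3) $(\varphi\prec\psi)\supset((\varphi\vee\psi)\prec\psi)$;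 (O4) $((\varphi\prec\psi)\equiv(\varphi\prec\neg\psi))\wedge((\varphi\prec\psi)\equiv(\neg\varphi\prec\psi))$; (O5) $((\varphi\prec\psi)\equiv(\varphi\prec\Box\psi))\wedge((\varphi\prec\psi)\equiv(\Box\varphi\prec\psi))$; (C1) $(\varphi\prec(\varphi\vee\psi))\wedge(\psi\prec(\varphi\vee\psi))$; (C2) $((\varphi\prec\chi)\wedge(\psi\prec\chi))\supset((\varphi\vee\psi)\prec\chi)$; (C3) $((\varphi\prec\chi)\wedge(\chi\prec\varphi)\wedge(\psi\prec\zeta)\wedge(\zeta\prec\psi))\supset((\varphi\to\psi)\prec(\chi\to\zeta))$; rules (MP) from $\varphi,\varphi\supset\psi$ infer $\psi$, (Nec$_g$) from $\varphi$ infer $\Box\varphi$. A $g\mathbf{PAI}_0$-theory is a set of formulas closed under derivability in this calculus. $N$ is the map from $Fm$ onto the algebra of terms over $Var$ in binary symbols $\oplus,\rhd$ given by $N(p)=p$, $N(\neg\varphi)=N(\Box\varphi)=N(\varphi)$, $N(\varphi\vee\psi)=N(\varphi)\oplus N(\psi)$, $N(\varphi\to\psi)=N(\varphi)\rhd N(\psi)$; $N[Fm]$ is its image. For a theory $\Gamma$ define on $N[Fm]$: $N(\varphi)\le_\Gamma N(\psi)$ iff $\varphi\prec\psi\in\Gamma$ (this does not depend on the chosen preimages), and $N(\varphi)\sim_\Gamma N(\psi)$ iff $N(\varphi)\le_\Gamma N(\psi)$ and $N(\psi)\le_\Gamma N(\varphi)$; $\sim_\Gamma$ is a congruence of $\langle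 N[Fm],\oplus,\rhd\rangle$, and $\langle N[Fm]/{\sim_\Gamma},\oplus,\rhd\rangle$ is the quotient. On the quotient, $x\le_\oplus y$ iff $x\oplus y=y$. *)

theory Defs
  imports Main
begin

datatype fm = Var nat | Neg fm | Box fm | Disj fm fm | Imp fm fm

definition Conj :: "fm \<Rightarrow> fm \<Rightarrow> fm" where
  "Conj a b = Neg (Disj (Neg a) (Neg b))"
definition Sup :: "fm \<Rightarrow> fm \<Rightarrow> fm" where
  "Sup a b = Disj (Neg a) b"
definition Eqv :: "fm \<Rightarrow> fm \<Rightarrow> fm" where
  "Eqv a b = Conj (Sup a b) (Sup b a)"
definition Prec :: "fm \<Rightarrow> fm \<Rightarrow> fm" where
  "Prec a b = Imp b (Disj a (Neg a))"

inductive axiom :: "fm \<Rightarrow> bool" where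
  A1: "axiom (Sup a (Sup b a))"
| A2: "axiom (Sup (Sup a (Sup b c)) (Sup (Sup a b) (Sup a c)))"
| A3: "axiom (Sup (Sup (Neg a) (Neg b)) (Sup b a))"
| A4: "axiom (Eqv (Imp a b) (Conj (Box (Sup a b)) (Prec b a)))"
| K: "axiom (Sup (Box (Sup a b)) (Sup (Box a) (Box b)))"
| T: "axiom (Sup (Box a) a)"
| Four: "axiom (Sup (Box a) (Box (Box a)))"
| O1: "axiom (Prec a a)"
| O2: "axiom (Sup (Conj (Prec a b) (Prec b c)) (Prec a c))"
| O3: "axiom (Sup (Prec a b) (Prec (Disj a b) b))"
| O4: "axiom (Conj (Eqv (Prec a b) (Prec a (Neg b))) (Eqv (Prec a b) (Prec (Neg a) b)))"
| O5: "axiom (Conj (Eqv (Prec a b) (Prec a (Box b))) (Eqv (Prec a b) (Prec (Box a) b)))"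
| C1: "axiom (Conj (Prec a (Disj a b)) (Prec b (Disj a b)))"
| C2: "axiom (Sup (Conj (Prec a c) (Prec b c)) (Prec (Disj a b) c))"
| C3: "axiom (Sup (Conj (Conj (Conj (Prec a c) (Prec c a)) (Prec b d)) (Prec d b))
                  (Prec (Imp a b) (Imp c d)))"

inductive derivable :: "fm set \<Rightarrow> fm \<Rightarrow> bool" for G where
  hyp: "a \<in> G \<Longrightarrow> derivable G a"
| ax: "axiom a \<Longrightarrow> derivable G a"
| MP: "derivable G a \<Longrightarrow> derivable G (Sup a b) \<Longrightarrow> derivable G b"
| Nec: "derivable G a \<Longrightarrow> derivable G (Box a)"

definition is_theory :: "fm set \<Rightarrow> bool" where
  "is_theory G \<longleftrightarrow> (\<forall>a. derivable G a \<longrightarrow> a \<in> G)"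

datatype tm = TVar nat | Oplus tm tm | Rhd tm tm

fun N :: "fm \<Rightarrow> tm" where
  "N (Var p) = TVar p"
| "N (Neg a) = N a"
| "N (Box a) = N a"
| "N (Disj a b) = Oplus (N a) (N b)"
| "N (Imp a b) = Rhd (N a) (N b)"

definition leG :: "fm set \<Rightarrow> tm \<Rightarrow> tm \<Rightarrow> bool" where
  "leG G x y \<longleftrightarrow> (\<exists>a b. N a = x \<and> N b = y \<and> Prec a b \<in> G)"

definition simG :: "fm set \<Rightarrow> (tm \<times> tm) set" where
  "simG G = {(x, y). x \<in> range N \<and> y \<in> range N \<and> leG G x y \<and> leG G y x}"

definition cls :: "fm set \<Rightarrow> tm \<Rightarrow> tm set" where
  "cls G x = simG G `` {x}"

definition quot :: "fm set \<Rightarrow> tm set set" where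
  "quot G = range N // simG G"

definition qoplus :: "fm set \<Rightarrow> tm set \<Rightarrow> tm set \<Rightarrow> tm set" where
  "qoplus G X Y = simG G `` {Oplus a b | a b. a \<in> X \<and> b \<in> Y}"

definition qle_oplus :: "fm set \<Rightarrow> tm set \<Rightarrow> tm set \<Rightarrow> bool" where
  "qle_oplus G X Y \<longleftrightarrow> qoplus G X Y = Y"

end

theory Submission
  imports Defs
begin

inductive pd :: "fm set \<Rightarrow> fm \<Rightarrow> bool" for H where
  phyp: "a \<in> H \<Longrightarrow> pd H a"
| pA1: "pd H (Sup a (Sup b a))"
| pA2: "pd H (Sup (Sup a (Sup b c)) (Sup (Sup a b) (Sup a c)))"
| pA3: "pd H (Sup (Sup (Neg a) (Neg b)) (Sup b a))"
| pMP: "pd H a \<Longrightarrow> pd H (Sup a b) \<Longrightarrow> pd H b"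

lemma mp: "pd H (Sup a b) \<Longrightarrow> pd H a \<Longrightarrow> pd H b"
  using pMP by blast

lemma pd_id: "pd H (Sup a a)"
proof -
  have 1: "pd H (Sup (Sup a (Sup (Sup a a) a)) (Sup (Sup a (Sup a a)) (Sup a a)))" by (rule pA2)
  have 2: "pd H (Sup (Sup a (Sup a a)) (Sup a a))" using pMP[OF pA1 1] .
  show ?thesis using pMP[OF pA1 2] .
qed

lemma deduction: "pd (insert a H) b \<Longrightarrow> pd H (Sup a b)"
proof (induction rule: pd.induct)
  case (phyp c)
  show ?case
  proof (cases "c = a")
    case True then show ?thesis using pd_id by simp
  next
    case False then have "pd H c" using phyp by (auto intro: pd.phyp)
    then show ?thesis using pMP pA1 by blast
  qed
next
  case (pA1 x y) show ?case by (rule mp[OF pd.pA1 pd.pA1])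
next
  case (pA2 x y z) show ?case by (rule mp[OF pd.pA1 pd.pA2])
next
  case (pA3 x y) show ?case by (rule mp[OF pd.pA1 pd.pA3])
next
  case (pMP c d)
  show ?case using mp[OF mp[OF pd.pA2 pMP.IH(2)] pMP.IH(1)] .
qed

lemma nn_elim: "pd H (Sup (Neg (Neg b)) b)"
proof -
  let ?H = "insert (Neg (Neg b)) H"
  have h: "pd ?H (Neg (Neg b))" by (rule phyp) simp
  have 1: "pd ?H (Sup (Neg (Neg (Neg (Neg b)))) (Neg (Neg b)))" using mp[OF pA1 h] .
  have 2: "pd ?H (Sup (Neg b) (Neg (Neg (Neg b))))" using mp[OF pA3 1] .
  have 3: "pd ?H (Sup (Neg (Neg b)) b)" using mp[OF pA3 2] .
  have "pd ?H b" using mp[OF 3 h] .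
  then show ?thesis by (rule deduction)
qed

lemma nn_intro: "pd H (Sup b (Neg (Neg b)))"
  using mp[OF pA3 nn_elim] .

lemma hs: "pd H (Sup p q) \<Longrightarrow> pd H (Sup q r) \<Longrightarrow> pd H (Sup p r)"
proof -
  assume a: "pd H (Sup p q)" "pd H (Sup q r)"
  have "H \<subseteq> insert p H" by auto
  have m: "pd H x \<Longrightarrow> pd (insert p H) x" for x
    by (induction rule: pd.induct) (auto intro: pd.intros)
  have "pd (insert p H) p" by (rule phyp) simp
  then have "pd (insert p H) r" using mp[OF m[OF a(2)] mp[OF m[OF a(1)]]] by blast
  then show ?thesis by (rule deduction)
qed

lemma contra: "pd H (Sup p q) \<Longrightarrow> pd H (Sup (Neg q) (Neg p))"
proof -
  assume a: "pd H (Sup p q)"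
  have "pd H (Sup (Neg (Neg p)) (Neg (Neg q)))" using hs[OF hs[OF nn_elim a] nn_intro] .
  then show ?thesis using mp[OF pA3] by blast
qed

lemma conj_e1: "pd H (Sup (Conj a b) a)"
proof -
  let ?H = "insert (Neg a) H"
  have h: "pd ?H (Neg a)" by (rule phyp) simp
  have 1: "pd ?H (Sup (Neg (Neg b)) (Neg a))" using mp[OF pA1 h] .
  have 2: "pd ?H (Sup a (Neg b))" using mp[OF pA3 1] .
  have 3: "pd H (Sup (Neg a) (Sup a (Neg b)))" using deduction[OF 2] .
  have 4: "pd H (Sup (Neg (Sup a (Neg b))) (Neg (Neg a)))" using contra[OF 3] .
  show ?thesis using hs[OF 4 nn_elim] by (simp add: Conj_def Sup_def)
qed

lemma conj_e2: "pd H (Sup (Conj a b) b)"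
proof -
  have 4: "pd H (Sup (Neg (Sup a (Neg b))) (Neg (Neg b)))" using contra[OF pA1] .
  show ?thesis using hs[OF 4 nn_elim] by (simp add: Conj_def Sup_def)
qed

lemma conj_i: "pd H (Sup a (Sup b (Conj a b)))"
proof -
  let ?H = "insert (Sup a (Neg b)) (insert a H)"
  have h1: "pd ?H a" by (rule phyp) simp
  have h2: "pd ?H (Sup a (Neg b))" by (rule phyp) simp
  have "pd ?H (Neg b)" using mp[OF h2 h1] .
  then have 1: "pd (insert a H) (Sup (Sup a (Neg b)) (Neg b))" by (rule deduction)
  have 2: "pd (insert a H) (Sup (Neg (Neg b)) (Neg (Sup a (Neg b))))" using contra[OF 1] .
  have 3: "pd (insert a H) (Sup b (Conj a b))" using hs[OF nn_intro 2] by (simp add: Conj_def Sup_def)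
  show ?thesis using deduction[OF 3] .
qed

lemma pd_derivable: "pd G x \<Longrightarrow> derivable G x"
  by (induction rule: pd.induct) (auto intro: derivable.intros axiom.intros)

context fixes G assumes th: "is_theory G" begin

lemma pdG: "pd G x \<Longrightarrow> x \<in> G"
  using th pd_derivable unfolding is_theory_def by blast

lemma axG: "axiom x \<Longrightarrow> x \<in> G"
  using th derivable.ax unfolding is_theory_def by blast

lemma mpG: "Sup x y \<in> G \<Longrightarrow> x \<in> G \<Longrightarrow> y \<in> G"
  using pdG mp phyp by blast

lemma conjG: "Conj x y \<in> G \<longleftrightarrow> x \<in> G \<and> y \<in> G"
proof
  assume "Conj x y \<in> G"
  then have "pd G (Conj x y)" by (rule phyp)
  then show "x \<in> G \<and> y \<in> G" using mp[OF conj_e1] mp[OF conj_e2] pdG by blast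
next
  assume "x \<in> G \<and> y \<in> G"
  then show "Conj x y \<in> G" using mp[OF mp[OF conj_i]] phyp pdG by blast
qed

lemma eqvG: "Eqv x y \<in> G \<Longrightarrow> x \<in> G \<longleftrightarrow> y \<in> G"
  unfolding Eqv_def using conjG mpG by blast

lemma P_refl: "Prec a a \<in> G" by (rule axG) (rule O1)

lemma P_trans: "Prec a b \<in> G \<Longrightarrow> Prec b c \<in> G \<Longrightarrow> Prec a c \<in> G"
  using mpG[OF axG[OF O2]] conjG by blast

lemma P_negR: "Prec a (Neg b) \<in> G \<longleftrightarrow> Prec a b \<in> G"
  using axG[OF O4] conjG eqvG by blast
lemma P_negL: "Prec (Neg a) b \<in> G \<longleftrightarrow> Prec a b \<in> G"
  using axG[OF O4] conjG eqvG by blast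
lemma P_boxR: "Prec a (Box b) \<in> G \<longleftrightarrow> Prec a b \<in> G"
  using axG[OF O5] conjG eqvG by blast
lemma P_boxL: "Prec (Box a) b \<in> G \<longleftrightarrow> Prec a b \<in> G"
  using axG[OF O5] conjG eqvG by blast

lemma P_C1a: "Prec a (Disj a b) \<in> G" using axG[OF C1] conjG by blast
lemma P_C1b: "Prec b (Disj a b) \<in> G" using axG[OF C1] conjG by blast
lemma P_C2: "Prec a c \<in> G \<Longrightarrow> Prec b c \<in> G \<Longrightarrow> Prec (Disj a b) c \<in> G"
  using mpG[OF axG[OF C2]] conjG by blast
lemma P_O3: "Prec a b \<in> G \<Longrightarrow> Prec (Disj a b) b \<in> G"
  using mpG[OF axG[OF O3]] by blast
lemma P_C3: "Prec a c \<in> G \<Longrightarrow> Prec c a \<in> G \<Longrightarrow> Prec b d \<in> G \<Longrightarrow> Prec d b \<in> G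
   \<Longrightarrow> Prec (Imp a b) (Imp c d) \<in> G"
  using mpG[OF axG[OF C3]] conjG by blast

lemma P_disj: "Prec a1 b1 \<in> G \<Longrightarrow> Prec a2 b2 \<in> G \<Longrightarrow> Prec (Disj a1 a2) (Disj b1 b2) \<in> G"
  using P_C2 P_trans P_C1a P_C1b by blast

lemma key: "N a = N b \<Longrightarrow> Prec a b \<in> G"
proof (induction "size a + size b" arbitrary: a b rule: less_induct)
  case less
  show ?case
  proof (cases "\<exists>a0. a = Neg a0 \<or> a = Box a0")
    case True
    then obtain a0 where "a = Neg a0 \<or> a = Box a0" by blast
    then show ?thesis using less P_negL P_boxL by auto
  next
    case F1: False
    show ?thesis
    proof (cases "\<exists>b0. b = Neg b0 \<or> b = Box b0")
      case True
      then obtain b0 where "b = Neg b0 \<or> b = Box b0" by blast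
      then show ?thesis using less P_negR P_boxR by auto
    next
      case F2: False
      show ?thesis
      proof (cases a)
        case (Var p) then show ?thesis using F2 less.prems P_refl by (cases b) auto
      next
        case (Neg x) then show ?thesis using F1 by auto
      next
        case (Box x) then show ?thesis using F1 by auto
      next
        case (Disj a1 a2)
        then obtain b1 b2 where b: "b = Disj b1 b2" "N a1 = N b1" "N a2 = N b2"
          using F2 less.prems by (cases b) auto
        have "Prec a1 b1 \<in> G" "Prec a2 b2 \<in> G"
          using less.hyps b Disj by auto
        then show ?thesis using P_disj b Disj by simp
      next
        case (Imp a1 a2)
        then obtain b1 b2 where b: "b = Imp b1 b2" "N a1 = N b1" "N a2 = N b2"
          using F2 less.prems by (cases b) auto
        have "Prec a1 b1 \<in> G" "Prec a2 b2 \<in> G" "Prec b1 a1 \<in> G" "Prec b2 a2 \<in> G"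
          using less.hyps b Imp by auto
        then show ?thesis using P_C3 b Imp by simp
      qed
    qed
  qed
qed

lemma indep: "N a = N a' \<Longrightarrow> N b = N b' \<Longrightarrow> Prec a b \<in> G \<Longrightarrow> Prec a' b' \<in> G"
  using key P_trans by metis

lemma leG_iff: "leG G (N a) (N b) \<longleftrightarrow> Prec a b \<in> G"
  unfolding leG_def using indep by metis

lemma sim_iff: "(N a, y) \<in> simG G \<longleftrightarrow> (\<exists>c. y = N c \<and> Prec a c \<in> G \<and> Prec c a \<in> G)"
  unfolding simG_def using leG_iff by auto

lemma cls_eq: "cls G (N a) = {N c | c. Prec a c \<in> G \<and> Prec c a \<in> G}"
  unfolding cls_def using sim_iff by auto

lemma cls_eq_iff: "cls G (N a) = cls G (N b) \<longleftrightarrow> Prec a b \<in> G \<and> Prec b a \<in> G"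
proof
  assume "cls G (N a) = cls G (N b)"
  then have "N b \<in> cls G (N a)" using cls_eq P_refl by auto
  then obtain c where "N b = N c" "Prec a c \<in> G" "Prec c a \<in> G" using cls_eq by auto
  then show "Prec a b \<in> G \<and> Prec b a \<in> G" using indep by metis
next
  assume "Prec a b \<in> G \<and> Prec b a \<in> G"
  then show "cls G (N a) = cls G (N b)" unfolding cls_eq using P_trans by blast
qed

lemma qoplus_eq: "qoplus G (cls G (N a)) (cls G (N b)) = cls G (N (Disj a b))"
proof -
  let ?S = "{Oplus u v | u v. u \<in> cls G (N a) \<and> v \<in> cls G (N b)}"
  have S: "?S = {N (Disj c d) | c d. Prec a c \<in> G \<and> Prec c a \<in> G \<and> Prec b d \<in> G \<and> Prec d b \<in> G}"
    unfolding cls_eq by fastforce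
  have "simG G `` ?S = cls G (N (Disj a b))"
  proof
    show "simG G `` ?S \<subseteq> cls G (N (Disj a b))"
    proof
      fix y assume "y \<in> simG G `` ?S"
      then obtain c d where cd: "Prec a c \<in> G" "Prec c a \<in> G" "Prec b d \<in> G" "Prec d b \<in> G"
        and y: "(N (Disj c d), y) \<in> simG G" unfolding S by auto
      from y obtain e where e: "y = N e" "Prec (Disj c d) e \<in> G" "Prec e (Disj c d) \<in> G"
        using sim_iff by blast
      have "Prec (Disj a b) (Disj c d) \<in> G" "Prec (Disj c d) (Disj a b) \<in> G"
        using P_disj cd by auto
      then show "y \<in> cls G (N (Disj a b))" unfolding cls_eq using e P_trans by blast
    qed
  next
    show "cls G (N (Disj a b)) \<subseteq> simG G `` ?S"
    proof
      fix y assume "y \<in> cls G (N (Disj a b))"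
      then have "(N (Disj a b), y) \<in> simG G" unfolding cls_def by simp
      moreover have "N (Disj a b) \<in> ?S" unfolding S using P_refl by blast
      ultimately show "y \<in> simG G `` ?S" by blast
    qed
  qed
  then show ?thesis unfolding qoplus_def .
qed

lemma main_aux: "qle_oplus G (cls G (N a)) (cls G (N b)) \<longleftrightarrow> Prec a b \<in> G"
proof -
  have "qle_oplus G (cls G (N a)) (cls G (N b)) \<longleftrightarrow>
        Prec (Disj a b) b \<in> G \<and> Prec b (Disj a b) \<in> G"
    unfolding qle_oplus_def qoplus_eq cls_eq_iff ..
  also have "\<dots> \<longleftrightarrow> Prec a b \<in> G"
    using P_O3 P_C1a P_C1b P_trans by blast
  finally show ?thesis .
qed

end

theorem mainTheorem11:
  assumes "is_theory G"
  shows "(qle_oplus G (cls G (N a)) (cls G (N b)) \<longleftrightarrow> leG G (N a) (N b))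
       \<and> (qle_oplus G (cls G (N a)) (cls G (N b)) \<longleftrightarrow> Prec a b \<in> G)"
  using main_aux[OF assms] leG_iff[OF assms] by blast

end
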